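(* Let $W,V$ be subspaces of $\mathbb{R}^n$ with $\mathbb{R}^n=W\oplus V^\perp$, and let $\mu$ and $\nu$ be probabilistic frames for $W$ and $V$ respectively. Then $\mu$ and $\nu$ perform probabilistic consistent reconstruction if and only if $\nu$ is an oblique dual probabilistic frame of $\mu$ on $V$.
   Context: $\mathcal{P}_2(W)$ denotes Borel probability measures on $\mathbb{R}^n$ concentrated on $W$ with finite second moment. $\mu\in\mathcal{P}_2(W)$ is a probabilistic frame for $W$ if there exist $0<A\le B<\infty$ with $A\|\mathbf{x}\|^2\le\int_W|\langle\mathbf{x},\mathbf{y}\rangle|^2d\mu(\mathbf{y})\le B\|\mathbf{x}\|^2$ for all $\mathbf{x}\in W$. $\Gamma(\mu,\nu)$ is the set of Borel probability measures on $W\times V$ with marginals $\mu$ and $\nu$. $\boldsymbol{\pi}_{WV^\perp}$ is the oblique projection of $\mathbb{R}^n$ onto $W$ along $V^\perp$. $\nu\in\mathcal{P}_2(V)$ is an oblique dual probabilistic frame of $\mu\in\mathcal{P}_2(W)$ on $V$ if there exists $\gamma\in\Gamma(\mu,\nu)$ with $\boldsymbol{\pi}_{WV^\perp}=\int_{W\times V}\mathbf{x}\mathbf{y}^t\,d\gamma(\mathbf{x},\mathbf{y})$. $\mu$ and $\nu$ perform probabilistic consistent reconstruction if there exists $\gamma\in\Gamma(\mu,\nu)$ such that for every $\mathbf{f}\in\mathbb{R}^n$, $\langle\mathbf{f},\mathbf{z}\rangle=\langle\hat{\mathbf{f}},\mathbf{z}\rangle$ for $\nu$-almost all $\mathbf{z}\in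 V$, where $\hat{\mathbf{f}}=\int_{W\times V}\mathbf{x}\langle\mathbf{y},\mathbf{f}\rangle\,d\gamma(\mathbf{x},\mathbf{y})$. *)

theory Defs
  imports "HOL-Analysis.Analysis" "HOL-Probability.Probability"
begin


definition P2 :: "(real^'n) set \<Rightarrow> (real^'n) measure \<Rightarrow> bool" where
  "P2 W \<mu> \<longleftrightarrow> prob_space \<mu> \<and> sets \<mu> = sets borel \<and> emeasure \<mu> W = 1
      \<and> integrable \<mu> (\<lambda>y. (norm y)\<^sup>2)"

definition prob_frame :: "(real^'n) set \<Rightarrow> (real^'n) measure \<Rightarrow> bool" where
  "prob_frame W \<mu> \<longleftrightarrow> P2 W \<mu> \<and>
     (\<exists>A B. 0 < A \<and> A \<le> B \<and>
        (\<forall>x\<in>W. A * (norm x)\<^sup>2 \<le> (\<integral>y. \<bar>x \<bullet> y\<bar>\<^sup>2 \<partial>\<mu>) \<and>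
                (\<integral>y. \<bar>x \<bullet> y\<bar>\<^sup>2 \<partial>\<mu>) \<le> B * (norm x)\<^sup>2))"

text \<open>Gamma(mu,nu): Borel probability measures on the product with marginals mu and nu
  (such measures are automatically concentrated on W x V).\<close>
definition couplings :: "(real^'n) measure \<Rightarrow> (real^'n) measure \<Rightarrow> ((real^'n) \<times> (real^'n)) measure set" where
  "couplings \<mu> \<nu> = {\<gamma>. prob_space \<gamma> \<and> sets \<gamma> = sets borel \<and>
       distr \<gamma> borel fst = \<mu> \<and> distr \<gamma> borel snd = \<nu>}"

definition oblique_proj :: "(real^'n) set \<Rightarrow> (real^'n) set \<Rightarrow> real^'n \<Rightarrow> real^'n" where
  "oblique_proj W V x = (THE w. w \<in> W \<and> x - w \<in> orthogonal_comp V)"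

definition outer :: "real^'n \<Rightarrow> real^'n \<Rightarrow> real^'n^'n" where
  "outer x y = (\<chi> i j. x $ i * y $ j)"

definition oblique_dual :: "(real^'n) set \<Rightarrow> (real^'n) set \<Rightarrow> (real^'n) measure \<Rightarrow> (real^'n) measure \<Rightarrow> bool" where
  "oblique_dual W V \<mu> \<nu> \<longleftrightarrow>
     (\<exists>\<gamma>\<in>couplings \<mu> \<nu>. matrix (oblique_proj W V) = (\<integral>p. outer (fst p) (snd p) \<partial>\<gamma>))"

definition consistent_reconstruction :: "(real^'n) measure \<Rightarrow> (real^'n) measure \<Rightarrow> bool" where
  "consistent_reconstruction \<mu> \<nu> \<longleftrightarrow>
     (\<exists>\<gamma>\<in>couplings \<mu> \<nu>. \<forall>f::real^'n.
        AE z in \<nu>. f \<bullet> z = (\<integral>p. (snd p \<bullet> f) *\<^sub>R fst p \<partial>\<gamma>) \<bullet> z)"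

end

theory Submission
  imports Defs
begin

lemma meas_cont:
  fixes f :: "'a::topological_space \<Rightarrow> 'b::topological_space"
  assumes "sets M = sets borel" "continuous_on UNIV f"
  shows "f \<in> borel_measurable M"
  by (subst measurable_cong_sets[OF assms(1) refl]) (rule borel_measurable_continuous_onI[OF assms(2)])

lemma op_char:
  fixes W V :: "(real^'n) set"
  assumes "subspace W" and "subspace V"
    and "W + orthogonal_comp V = UNIV" and "W \<inter> orthogonal_comp V = {0}"
  shows "oblique_proj W V x \<in> W \<and> x - oblique_proj W V x \<in> orthogonal_comp V"
    and "w \<in> W \<Longrightarrow> x - w \<in> orthogonal_comp V \<Longrightarrow> oblique_proj W V x = w"
proof -
  have uniq: "w1 = w2" if "w1 \<in> W" "x - w1 \<in> orthogonal_comp V" "w2 \<in> W" "x - w2 \<in> orthogonal_comp V" for w1 w2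
  proof -
    have "w1 - w2 \<in> W" using that assms(1) by (simp add: subspace_diff)
    moreover have "(x - w2) - (x - w1) \<in> orthogonal_comp V"
      using that by (rule_tac subspace_diff[OF subspace_orthogonal_comp]) auto
    moreover have "(x - w2) - (x - w1) = w1 - w2" by simp
    ultimately have "w1 - w2 \<in> W \<inter> orthogonal_comp V" by simp
    then show ?thesis using assms(4) by auto
  qed
  have "x \<in> W + orthogonal_comp V" using assms(3) by simp
  then obtain w0 u0 where wu: "w0 \<in> W" "u0 \<in> orthogonal_comp V" "x = w0 + u0" by (auto elim: set_plus_elim)
  have ex: "\<exists>w. w \<in> W \<and> x - w \<in> orthogonal_comp V" using wu by (intro exI[of _ w0]) simp
  have "\<exists>!w. w \<in> W \<and> x - w \<in> orthogonal_comp V" using ex uniq by blast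
  then have th: "oblique_proj W V x \<in> W \<and> x - oblique_proj W V x \<in> orthogonal_comp V"
    unfolding oblique_proj_def by (rule theI')
  then show "oblique_proj W V x \<in> W \<and> x - oblique_proj W V x \<in> orthogonal_comp V" .
  show "w \<in> W \<Longrightarrow> x - w \<in> orthogonal_comp V \<Longrightarrow> oblique_proj W V x = w"
    using th uniq by blast
qed

lemma op_linear:
  fixes W V :: "(real^'n) set"
  assumes "subspace W" and "subspace V"
    and "W + orthogonal_comp V = UNIV" and "W \<inter> orthogonal_comp V = {0}"
  shows "linear (oblique_proj W V)"
proof (rule linearI)
  note c = op_char[OF assms]
  fix x y :: "real^'n" and r :: real
  show "oblique_proj W V (x + y) = oblique_proj W V x + oblique_proj W V y"
  proof (rule c(2))
    show "oblique_proj W V x + oblique_proj W V y \<in> W"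
      using c(1)[of x] c(1)[of y] assms(1) by (simp add: subspace_add)
    have "(x - oblique_proj W V x) + (y - oblique_proj W V y) \<in> orthogonal_comp V"
      using c(1)[of x] c(1)[of y] by (simp add: subspace_add subspace_orthogonal_comp)
    then show "x + y - (oblique_proj W V x + oblique_proj W V y) \<in> orthogonal_comp V"
      by (simp add: algebra_simps)
  qed
  show "oblique_proj W V (r *\<^sub>R x) = r *\<^sub>R oblique_proj W V x"
  proof (rule c(2))
    show "r *\<^sub>R oblique_proj W V x \<in> W"
      using c(1)[of x] assms(1) by (simp add: subspace_scale)
    have "r *\<^sub>R (x - oblique_proj W V x) \<in> orthogonal_comp V"
      using c(1)[of x] by (simp add: subspace_scale subspace_orthogonal_comp)
    then show "r *\<^sub>R x - r *\<^sub>R oblique_proj W V x \<in> orthogonal_comp V"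
      by (simp add: algebra_simps)
  qed
qed

lemma frame_zero:
  fixes V :: "(real^'n) set"
  assumes "prob_frame V \<nu>" "u \<in> V" "AE z in \<nu>. u \<bullet> z = 0"
  shows "u = 0"
proof -
  obtain A B where AB: "0 < A" "\<forall>x\<in>V. A * (norm x)\<^sup>2 \<le> (\<integral>y. \<bar>x \<bullet> y\<bar>\<^sup>2 \<partial>\<nu>)"
    using assms(1) unfolding prob_frame_def by blast
  have "(\<integral>y. \<bar>u \<bullet> y\<bar>\<^sup>2 \<partial>\<nu>) = 0"
    by (rule integral_eq_zero_AE) (use assms(3) in auto)
  then have "A * (norm u)\<^sup>2 \<le> 0" using AB assms(2) by force
  then have "(norm u)\<^sup>2 \<le> 0" using AB(1)
    by (simp add: mult_le_0_iff)
  then show ?thesis by simp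
qed

lemma AE_in:
  fixes W :: "(real^'n) set"
  assumes "P2 W \<mu>" "subspace W"
  shows "AE x in \<mu>. x \<in> W"
proof -
  have ps: "prob_space \<mu>" and s: "sets \<mu> = sets borel" and e: "emeasure \<mu> W = 1"
    using assms(1) unfolding P2_def by auto
  have Wb: "W \<in> sets \<mu>" using s closed_subspace[OF assms(2)] by simp
  show ?thesis
    using prob_space.AE_in_set_eq_1[OF ps Wb] e ps
    by (simp add: measure_def)
qed

lemma norm_outer: "norm (outer x y) = norm x * norm y"
proof -
  have "norm (outer x y) = L2_set (\<lambda>i. norm (outer x y $ i)) UNIV" by (simp add: norm_vec_def)
  also have "\<dots> = L2_set (\<lambda>i. norm y * \<bar>x $ i\<bar>) UNIV"
  proof (rule L2_set_cong[OF refl])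
    fix i
    have "outer x y $ i = (x $ i) *\<^sub>R y" by (simp add: outer_def vec_eq_iff)
    then show "norm (outer x y $ i) = norm y * \<bar>x $ i\<bar>" by simp
  qed
  also have "\<dots> = norm y * L2_set (\<lambda>i. \<bar>x $ i\<bar>) UNIV"
    by (simp add: L2_set_right_distrib)
  also have "\<dots> = norm x * norm y" by (simp add: norm_vec_def)
  finally show ?thesis .
qed

lemma outer_mult: "outer x y *v f = (y \<bullet> f) *\<^sub>R x"
  by (simp add: vec_eq_iff outer_def matrix_vector_mult_def inner_vec_def sum_distrib_left mult.assoc mult.commute mult.left_commute)

lemma mv_linear: "bounded_linear (\<lambda>A::real^'n^'m. A *v f)"
proof -
  have "linear (\<lambda>A::real^'n^'m. A *v f)"
    by (auto intro!: linearI simp: vec_eq_iff matrix_vector_mult_def sum.distrib sum_distrib_left algebra_simps)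
  then show ?thesis by (simp add: linear_conv_bounded_linear)
qed

lemma sq_bound: "norm (a::real^'n) * norm (b::real^'n) \<le> (norm a)\<^sup>2 + (norm b)\<^sup>2"
proof -
  have "0 \<le> (norm a - norm b)\<^sup>2" by simp
  then have h: "norm a * (norm b * 2) \<le> norm a * norm a + norm b * norm b"
    by (simp add: power2_eq_square algebra_simps)
  have "0 \<le> norm a * norm b" by simp
  with h show ?thesis unfolding power2_eq_square by linarith
qed

lemma coup:
  fixes W V :: "(real^'n) set"
  assumes g: "\<gamma> \<in> couplings \<mu> \<nu>" and P: "P2 W \<mu>" "P2 V \<nu>" and sW: "subspace W"
  shows "integrable \<gamma> (\<lambda>p. outer (fst p) (snd p))"
    and "(\<integral>p. (snd p \<bullet> f) *\<^sub>R fst p \<partial>\<gamma>) = (\<integral>p. outer (fst p) (snd p) \<partial>\<gamma>) *v f"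
    and "(\<integral>p. outer (fst p) (snd p) \<partial>\<gamma>) *v f \<in> W"
proof -
  have sg: "sets \<gamma> = sets borel" and d1: "distr \<gamma> borel fst = \<mu>" and d2: "distr \<gamma> borel snd = \<nu>"
    using g unfolding couplings_def by auto
  have mf: "fst \<in> borel_measurable \<gamma>" by (rule meas_cont[OF sg]) (intro continuous_intros)
  have ms: "snd \<in> borel_measurable \<gamma>" by (rule meas_cont[OF sg]) (intro continuous_intros)
  have mn: "(\<lambda>y::real^'n. (norm y)\<^sup>2) \<in> borel_measurable borel"
    by (rule meas_cont[OF refl]) (intro continuous_intros)
  have i1: "integrable \<gamma> (\<lambda>p. (norm (fst p))\<^sup>2)"
    using P(1) integrable_distr_eq[OF mf mn] d1 unfolding P2_def by simp
  have i2: "integrable \<gamma> (\<lambda>p. (norm (snd p))\<^sup>2)"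
    using P(2) integrable_distr_eq[OF ms mn] d2 unfolding P2_def by simp
  have i12: "integrable \<gamma> (\<lambda>p. (norm (fst p))\<^sup>2 + (norm (snd p))\<^sup>2)"
    using i1 i2 by simp
  show io: "integrable \<gamma> (\<lambda>p. outer (fst p) (snd p))"
  proof (rule Bochner_Integration.integrable_bound[OF i12])
    show "(\<lambda>p. outer (fst p) (snd p)) \<in> borel_measurable \<gamma>"
      by (rule meas_cont[OF sg]) (unfold outer_def, intro continuous_intros)
    show "AE p in \<gamma>. norm (outer (fst p) (snd p)) \<le> norm ((norm (fst p))\<^sup>2 + (norm (snd p))\<^sup>2)"
      by (intro always_eventually allI) (simp add: norm_outer sq_bound)
  qed
  have "(\<integral>p. (snd p \<bullet> f) *\<^sub>R fst p \<partial>\<gamma>) = (\<integral>p. outer (fst p) (snd p) *v f \<partial>\<gamma>)"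
    by (simp add: outer_mult)
  also have "\<dots> = (\<integral>p. outer (fst p) (snd p) \<partial>\<gamma>) *v f"
    by (rule integral_bounded_linear[OF mv_linear io])
  finally show eq: "(\<integral>p. (snd p \<bullet> f) *\<^sub>R fst p \<partial>\<gamma>) = (\<integral>p. outer (fst p) (snd p) \<partial>\<gamma>) *v f" .
  have ii: "integrable \<gamma> (\<lambda>p. (snd p \<bullet> f) *\<^sub>R fst p)"
    using integrable_bounded_linear[OF mv_linear io] by (simp add: outer_mult)
  have aeW: "AE p in \<gamma>. fst p \<in> W"
  proof -
    have "AE x in distr \<gamma> borel fst. x \<in> W" unfolding d1 by (rule AE_in[OF P(1) sW])
    moreover have "{x \<in> space borel. x \<in> W} \<in> sets borel"
      using closed_subspace[OF sW] by simp
    ultimately show ?thesis using AE_distr_iff[OF mf, of "\<lambda>x. x \<in> W"] by simp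
  qed
  have "(\<integral>p. outer (fst p) (snd p) \<partial>\<gamma>) *v f \<in> orthogonal_comp (orthogonal_comp W)"
    unfolding orthogonal_comp_def orthogonal_def
  proof (clarsimp)
    fix w assume w: "\<forall>y\<in>W. y \<bullet> w = 0"
    have "w \<bullet> (\<integral>p. (snd p \<bullet> f) *\<^sub>R fst p \<partial>\<gamma>) = (\<integral>p. w \<bullet> ((snd p \<bullet> f) *\<^sub>R fst p) \<partial>\<gamma>)"
      using integral_inner_right[of w \<gamma> "\<lambda>p. (snd p \<bullet> f) *\<^sub>R fst p", OF ii] by simp
    also have "\<dots> = 0"
      by (rule integral_eq_zero_AE) (use aeW w in \<open>auto simp: inner_commute\<close>)
    finally show "w \<bullet> ((\<integral>p. outer (fst p) (snd p) \<partial>\<gamma>) *v f) = 0" using eq by simp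
  qed
  then show "(\<integral>p. outer (fst p) (snd p) \<partial>\<gamma>) *v f \<in> W"
    using orthogonal_comp_self[OF sW] by simp
qed

theorem theorem4p4:
  fixes W V :: "(real^'n) set" and \<mu> \<nu> :: "(real^'n) measure"
  assumes "subspace W" and "subspace V"
    and "W + orthogonal_comp V = UNIV" and "W \<inter> orthogonal_comp V = {0}"
    and "prob_frame W \<mu>" and "prob_frame V \<nu>"
  shows "consistent_reconstruction \<mu> \<nu> \<longleftrightarrow> oblique_dual W V \<mu> \<nu>"
proof -
  note c = op_char[OF assms(1-4)]
  have P1: "P2 W \<mu>" and P2: "P2 V \<nu>" using assms(5,6) unfolding prob_frame_def by auto
  have aeV: "AE z in \<nu>. z \<in> V" by (rule AE_in[OF P2 assms(2)])
  show ?thesis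
  proof
    assume "consistent_reconstruction \<mu> \<nu>"
    then obtain \<gamma> where g: "\<gamma> \<in> couplings \<mu> \<nu>"
      and cr: "\<And>f::real^'n. AE z in \<nu>. f \<bullet> z = (\<integral>p. (snd p \<bullet> f) *\<^sub>R fst p \<partial>\<gamma>) \<bullet> z"
      unfolding consistent_reconstruction_def by blast
    define M where "M = (\<integral>p. outer (fst p) (snd p) \<partial>\<gamma>)"
    note cp = coup[OF g P1 P2 assms(1), folded M_def]
    have PM: "oblique_proj W V f = M *v f" for f
    proof (rule c(2))
      show "M *v f \<in> W" by (rule cp(3))
      obtain a b where ab: "a \<in> span V" "\<And>w. w \<in> span V \<Longrightarrow> orthogonal b w" "f - M *v f = a + b"
        using orthogonal_subspace_decomp_exists[of V "f - M *v f"] by metis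
      have aV: "a \<in> V" using ab(1) span_eq_iff[of V] assms(2) by blast
      have "AE z in \<nu>. a \<bullet> z = 0"
        using aeV cr[of f]
      proof eventually_elim
        case (elim z)
        have "b \<bullet> z = 0" using ab(2)[of z] elim(1) span_base[of z V] by (simp add: orthogonal_def)
        moreover have "(f - M *v f) \<bullet> z = 0" using elim(2) cp(2)[of f] by (simp add: inner_diff_left)
        ultimately show ?case using ab(3) by (simp add: inner_add_left)
      qed
      then have "a = 0" using frame_zero[OF assms(6) aV] by simp
      then have "f - M *v f = b" using ab(3) by simp
      then show "f - M *v f \<in> orthogonal_comp V"
        using ab(2) span_base by (auto simp: orthogonal_comp_def orthogonal_commute)
    qed
    have "matrix (oblique_proj W V) = M"
      by (simp add: vec_eq_iff matrix_def PM matrix_vector_mult_basis column_def)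
    then show "oblique_dual W V \<mu> \<nu>"
      unfolding oblique_dual_def M_def using g by blast
  next
    assume "oblique_dual W V \<mu> \<nu>"
    then obtain \<gamma> where g: "\<gamma> \<in> couplings \<mu> \<nu>"
      and od: "matrix (oblique_proj W V) = (\<integral>p. outer (fst p) (snd p) \<partial>\<gamma>)"
      unfolding oblique_dual_def by blast
    note cp = coup[OF g P1 P2 assms(1)]
    have "\<forall>f::real^'n. AE z in \<nu>. f \<bullet> z = (\<integral>p. (snd p \<bullet> f) *\<^sub>R fst p \<partial>\<gamma>) \<bullet> z"
    proof
      fix f :: "real^'n"
      have eq: "(\<integral>p. (snd p \<bullet> f) *\<^sub>R fst p \<partial>\<gamma>) = oblique_proj W V f"
        using cp(2)[of f] od[symmetric] matrix_works[OF op_linear[OF assms(1-4), folded linear_matrix_vector_mul_eq]] by simp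
      show "AE z in \<nu>. f \<bullet> z = (\<integral>p. (snd p \<bullet> f) *\<^sub>R fst p \<partial>\<gamma>) \<bullet> z"
        using aeV
      proof eventually_elim
        case (elim z)
        have "z \<bullet> (f - oblique_proj W V f) = 0"
          using c(1)[of f] elim by (auto simp: orthogonal_comp_def orthogonal_def)
        then show ?case using eq by (simp add: inner_diff_right inner_commute)
      qed
    qed
    then show "consistent_reconstruction \<mu> \<nu>"
      unfolding consistent_reconstruction_def using g by blast
  qed
qed

end
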